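(* Fix $\epsilon\in(0,1/5)$ and an integer $d\geq3$. There is a constant $C=C(d,\epsilon)>0$ such that for every natural number $n\geq1$ and every $t\in\mathbb{N}\cap[1,2\epsilon\log_d n]$, $$\mathcal{G}_{n,d}\big(\{G\in\mathbb{G}_{n,d}: |\mathfrak{C}_t(G)|\geq n^{1-2\epsilon}\}\big)\leq C\,n^{5\epsilon-1}.$$
   Context: Graphs are undirected with no loops or parallel edges. $\mathbb{G}_{n,d}$ is the finite set of $d$-regular graphs on vertex set $\{1,\dots,n\}$ and $\mathcal{G}_{n,d}$ the uniform probability measure on it (the statement concerns those $n$ for which $\mathbb{G}_{n,d}$ is nonempty). A cycle in $G$ is a set $C=\{x_1,\dots,x_k\}$ of distinct vertices such that $\{x_1,x_2\},\dots,\{x_{k-1},x_k\},\{x_k,x_1\}$ are edges; $\mathfrak{C}_t(G)$ is the set of cycles $C$ with $|C|<t$. *)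

theory Defs
  imports "HOL-Probability.Probability_Mass_Function"
begin

text \<open>A graph on vertex set {1..n} is given by its edge set, a set of 2-element
subsets of {1..n}. No loops, no parallel edges.\<close>

definition possible_edges :: "nat \<Rightarrow> nat set set" where
  "possible_edges n = {e. \<exists>x y. e = {x, y} \<and> x \<noteq> y \<and> x \<in> {1..n} \<and> y \<in> {1..n}}"

definition degree :: "nat set set \<Rightarrow> nat \<Rightarrow> nat" where
  "degree E v = card {e \<in> E. v \<in> e}"

definition regular_graphs :: "nat \<Rightarrow> nat \<Rightarrow> nat set set set" where
  "regular_graphs n d = {E. E \<subseteq> possible_edges n \<and> (\<forall>v\<in>{1..n}. degree E v = d)}"

definition uniform_regular :: "nat \<Rightarrow> nat \<Rightarrow> nat set set pmf" where
  "uniform_regular n d = pmf_of_set (regular_graphs n d)"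

definition is_cycle :: "nat set set \<Rightarrow> nat set \<Rightarrow> bool" where
  "is_cycle E C \<longleftrightarrow> (\<exists>xs. distinct xs \<and> length xs \<ge> 3 \<and> set xs = C \<and>
      (\<forall>i. i + 1 < length xs \<longrightarrow> {xs ! i, xs ! (i + 1)} \<in> E) \<and>
      {last xs, hd xs} \<in> E)"

definition short_cycles :: "nat \<Rightarrow> nat set set \<Rightarrow> nat set set" where
  "short_cycles t E = {C. is_cycle E C \<and> card C < t}"

end

theory Submission
  imports Defs
begin


definition nb :: "nat set set \<Rightarrow> nat \<Rightarrow> nat set" where
  "nb G x = {y. {x,y} \<in> G}"

lemma possible_edges_finite: "finite (possible_edges n)"
proof -
  have "possible_edges n \<subseteq> Pow {1..n}" unfolding possible_edges_def by auto
  thus ?thesis by (meson finite_Pow_iff finite_atLeastAtMost finite_subset)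
qed

lemma regular_graphs_finite: "finite (regular_graphs n d)"
proof -
  have "regular_graphs n d \<subseteq> Pow (possible_edges n)" unfolding regular_graphs_def by auto
  thus ?thesis by (meson finite_Pow_iff possible_edges_finite finite_subset)
qed

lemma degree_nb:
  assumes "G \<subseteq> possible_edges n"
  shows "degree G w = card (nb G w)"
proof -
  have "bij_betw (\<lambda>y. {w,y}) (nb G w) {e\<in>G. w\<in>e}"
  proof (rule bij_betwI')
    fix y z assume "y \<in> nb G w" "z \<in> nb G w"
    show "({w, y} = {w, z}) = (y = z)" by (auto simp: doubleton_eq_iff)
  next
    fix y assume "y \<in> nb G w" thus "{w, y} \<in> {e \<in> G. w \<in> e}" by (auto simp: nb_def)
  next
    fix e assume e: "e \<in> {e \<in> G. w \<in> e}"
    then obtain a b where "e = {a,b}" using assms unfolding possible_edges_def by blast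
    with e have "w = a \<or> w = b" by auto
    then show "\<exists>y\<in>nb G w. e = {w, y}"
    proof
      assume "w = a" thus "\<exists>y\<in>nb G w. e = {w, y}" using e \<open>e = {a,b}\<close> by (intro bexI[of _ b]) (auto simp: nb_def)
    next
      assume "w = b" hence "e = {w,a}" using \<open>e = {a,b}\<close> by auto
      thus "\<exists>y\<in>nb G w. e = {w, y}" using e by (intro bexI[of _ a]) (auto simp: nb_def)
    qed
  qed
  thus ?thesis unfolding degree_def by (simp add: bij_betw_same_card)
qed

lemma nb_sub:
  assumes "G \<subseteq> possible_edges n"
  shows "nb G x \<subseteq> {1..n}" "x \<notin> nb G x" "nb G x \<noteq> {} \<Longrightarrow> x \<in> {1..n}"
proof -
  show "nb G x \<subseteq> {1..n}"
  proof
    fix y assume "y \<in> nb G x"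
    hence "{x,y} \<in> possible_edges n" using assms nb_def by auto
    then obtain a b where "{x,y} = {a,b}" "a \<in> {1..n}" "b \<in> {1..n}" unfolding possible_edges_def by blast
    thus "y \<in> {1..n}" by (metis doubleton_eq_iff)
  qed
  show "x \<notin> nb G x"
  proof
    assume "x \<in> nb G x"
    hence "{x} \<in> possible_edges n" using assms nb_def by auto
    then obtain a b where "{x} = {a,b}" "a \<noteq> b" unfolding possible_edges_def by blast
    hence "a = b" by (metis insertI1 insert_commute singletonD)
    thus False using \<open>a \<noteq> b\<close> by simp
  qed
  show "x \<in> {1..n}" if ne: "nb G x \<noteq> {}"
  proof -
    obtain y where "y \<in> nb G x" using ne by blast
    hence "{x,y} \<in> possible_edges n" using assms nb_def by auto
    then obtain a b where "{x,y} = {a,b}" "a \<in> {1..n}" "b \<in> {1..n}" unfolding possible_edges_def by blast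
    thus "x \<in> {1..n}" by (metis doubleton_eq_iff)
  qed
qed

lemma rg_iff: "G \<in> regular_graphs n d \<longleftrightarrow> G \<subseteq> possible_edges n \<and> (\<forall>v\<in>{1..n}. card (nb G v) = d)"
proof
  assume "G \<in> regular_graphs n d"
  thus "G \<subseteq> possible_edges n \<and> (\<forall>v\<in>{1..n}. card (nb G v) = d)"
    unfolding regular_graphs_def using degree_nb[of G n] by simp
next
  assume a: "G \<subseteq> possible_edges n \<and> (\<forall>v\<in>{1..n}. card (nb G v) = d)"
  thus "G \<in> regular_graphs n d"
    unfolding regular_graphs_def using degree_nb[of G n] by simp
qed

lemma rg_nb:
  assumes "G \<in> regular_graphs n d" "x \<in> {1..n}"
  shows "card (nb G x) = d"
  using assms rg_iff by blast

lemma rg_sub: "G \<in> regular_graphs n d \<Longrightarrow> G \<subseteq> possible_edges n"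
  unfolding regular_graphs_def by auto

lemma nb_finite: "G \<subseteq> possible_edges n \<Longrightarrow> finite (nb G x)"
  by (meson nb_sub(1) finite_atLeastAtMost finite_subset)



lemma nb_insert: "nb (insert {a,b} G) w = nb G w \<union> (if w = a then {b} else {}) \<union> (if w = b then {a} else {})"
  unfolding nb_def by (auto simp: doubleton_eq_iff)

lemma nb_remove: "nb (G - {{a,b}}) w = nb G w - ((if w = a then {b} else {}) \<union> (if w = b then {a} else {}))"
  unfolding nb_def by (auto simp: doubleton_eq_iff)

lemma card_swap1: "finite X \<Longrightarrow> b \<in> X \<Longrightarrow> a \<notin> X \<Longrightarrow> card (X - {b} \<union> {a}) = card X"
proof -
  assume f: "finite X" and b: "b \<in> X" and a: "a \<notin> X"
  have "card (X - {b} \<union> {a}) = card (insert a (X - {b}))" by simp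
  also have "\<dots> = Suc (card (X - {b}))" using f a by simp
  also have "\<dots> = card X" using card_Suc_Diff1[OF f b] by simp
  finally show ?thesis .
qed

lemma nb_mem: "y \<in> nb G x \<longleftrightarrow> {x,y} \<in> G" unfolding nb_def by simp

lemma nb_sym: "y \<in> nb G x \<longleftrightarrow> x \<in> nb G y" unfolding nb_def by (simp add: insert_commute)

definition sw :: "nat set set \<Rightarrow> nat \<Rightarrow> nat \<Rightarrow> nat \<Rightarrow> nat \<Rightarrow> nat set set" where
  "sw G u v x y = insert {u,x} (insert {v,y} (G - {{u,v}} - {{x,y}}))"

lemma sw_regular:
  assumes G: "G \<in> regular_graphs n d"
    and uv: "{u,v} \<in> G" and xy: "{x,y} \<in> G" and dist: "x \<noteq> u" "x \<noteq> v" "y \<noteq> u" "y \<noteq> v"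
    and ux: "{u,x} \<notin> G" and vy: "{v,y} \<notin> G"
  shows "sw G u v x y \<in> regular_graphs n d"
proof -
  have Gs: "G \<subseteq> possible_edges n" using G rg_sub by blast
  have "v \<in> nb G u" "u \<in> nb G v" "y \<in> nb G x" "x \<in> nb G y" using uv xy by (simp_all add: nb_def insert_commute)
  hence inr: "u \<in> {1..n}" "v \<in> {1..n}" "x \<in> {1..n}" "y \<in> {1..n}" using nb_sub(3)[OF Gs] by (metis empty_iff)+
  have "u \<noteq> v" using nb_sub(2)[OF Gs, of u] \<open>v \<in> nb G u\<close> by metis
  have "x \<noteq> y" using nb_sub(2)[OF Gs, of x] \<open>y \<in> nb G x\<close> by metis
  have nx: "x \<notin> nb G u" "y \<notin> nb G v" "u \<notin> nb G x" "v \<notin> nb G y" using ux vy by (simp_all add: nb_def insert_commute)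
  have sub: "sw G u v x y \<subseteq> possible_edges n"
  proof -
    have "{u,x} \<in> possible_edges n" "{v,y} \<in> possible_edges n"
      using inr dist unfolding possible_edges_def by auto
    thus ?thesis using Gs unfolding sw_def by auto
  qed
  have nbsw: "nb (sw G u v x y) w = (if w = u then nb G u - {v} \<union> {x} else if w = v then nb G v - {u} \<union> {y}
     else if w = x then nb G x - {y} \<union> {u} else if w = y then nb G y - {x} \<union> {v} else nb G w)" for w
    unfolding sw_def nb_insert nb_remove using dist \<open>u \<noteq> v\<close> \<open>x \<noteq> y\<close> by auto
  have fin: "finite (nb G w)" for w using nb_finite[OF Gs] .
  have "card (nb (sw G u v x y) w) = d" if w: "w \<in> {1..n}" for w
  proof -
    have "card (nb (sw G u v x y) w) = card (nb G w)"
    proof -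
      consider "w = u" | "w \<noteq> u" "w = v" | "w \<noteq> u" "w \<noteq> v" "w = x" | "w \<noteq> u" "w \<noteq> v" "w \<noteq> x" "w = y"
        | "w \<noteq> u" "w \<noteq> v" "w \<noteq> x" "w \<noteq> y" by blast
      thus ?thesis
      proof cases
        case 1 thus ?thesis using nbsw[of u] card_swap1[OF fin \<open>v \<in> nb G u\<close> nx(1)] by simp
      next
        case 2 thus ?thesis using nbsw[of v] \<open>u \<noteq> v\<close> card_swap1[OF fin \<open>u \<in> nb G v\<close> nx(2)] by simp
      next
        case 3 thus ?thesis using nbsw[of x] dist card_swap1[OF fin \<open>y \<in> nb G x\<close> nx(3)] by simp
      next
        case 4 thus ?thesis using nbsw[of y] dist \<open>x \<noteq> y\<close> card_swap1[OF fin \<open>x \<in> nb G y\<close> nx(4)] by simp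
      next
        case 5 thus ?thesis using nbsw[of w] by simp
      qed
    qed
    thus ?thesis using rg_nb[OF G w] by simp
  qed
  thus ?thesis using sub rg_iff by simp
qed

lemma sw_inv:
  assumes "{u,v} \<in> G" "{x,y} \<in> G" "{u,x} \<notin> G" "{v,y} \<notin> G"
  shows "G = insert {u,v} (insert {x,y} (sw G u v x y - {{u,x}} - {{v,y}}))"
  using assms unfolding sw_def by auto



lemma rg_finite_nb: "G \<in> regular_graphs n d \<Longrightarrow> finite (nb G x)"
  using nb_finite rg_sub by blast

lemma sum_nb_const:
  assumes G: "G \<in> regular_graphs n d" and X: "X \<subseteq> {1..n}"
  shows "(\<Sum>x\<in>X. card (nb G x)) = card X * d"
proof -
  have "(\<Sum>x\<in>X. card (nb G x)) = (\<Sum>x\<in>X. d)"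
    using rg_nb[OF G] X by (intro sum.cong) auto
  thus ?thesis by simp
qed

lemma switch_count:
  fixes H :: "nat set set"
  assumes uv: "u \<in> {1..n}" "v \<in> {1..n}" "u \<noteq> v" and uvH: "{u,v} \<notin> H" and fH: "finite H"
  shows "card {G \<in> regular_graphs n d. H \<subseteq> G \<and> {u,v} \<in> G} * (n*d)
     \<le> card {G \<in> regular_graphs n d. H \<subseteq> G \<and> {u,v} \<notin> G} * (d*d)
       + card {G \<in> regular_graphs n d. H \<subseteq> G \<and> {u,v} \<in> G} * (4*d + 2*card H + 2*(d*d))"
proof -
  define A where "A = {G \<in> regular_graphs n d. H \<subseteq> G \<and> {u,v} \<in> G}"
  define B where "B = {G \<in> regular_graphs n d. H \<subseteq> G \<and> {u,v} \<notin> G}"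
  define K where "K = 4*d + 2*card H + 2*(d*d)"
  define D where "D G = {(x,y). {x,y} \<in> G}" for G :: "nat set set"
  define S where "S G = {(x,y). {x,y} \<in> G \<and> x \<notin> {u,v} \<and> y \<notin> {u,v} \<and> {x,y} \<notin> H \<and> {u,x} \<notin> G \<and> {v,y} \<notin> G}" for G :: "nat set set"
  define T where "T G = nb G u \<times> nb G v" for G :: "nat set set"
  have finA: "finite A" "finite B" unfolding A_def B_def using regular_graphs_finite by auto
  have D_eq: "D G = Sigma {1..n} (nb G)" if G: "G \<in> regular_graphs n d" for G
  proof -
    have Gs: "G \<subseteq> possible_edges n" using G rg_sub by blast
    show ?thesis
    proof (intro set_eqI iffI)
      fix p assume "p \<in> D G"
      then obtain x y where p: "p = (x,y)" "{x,y} \<in> G" unfolding D_def by auto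
      hence "y \<in> nb G x" by (simp add: nb_def)
      hence "x \<in> {1..n}" using nb_sub(3)[OF Gs, of x] by (metis empty_iff)
      thus "p \<in> Sigma {1..n} (nb G)" using p \<open>y \<in> nb G x\<close> by simp
    next
      fix p assume "p \<in> Sigma {1..n} (nb G)"
      thus "p \<in> D G" unfolding D_def nb_def by auto
    qed
  qed
  have cardD: "card (D G) = n*d" if G: "G \<in> regular_graphs n d" for G
    using D_eq[OF G] sum_nb_const[OF G, of "{1..n}"] card_SigmaI[of "{1..n}" "nb G"] rg_finite_nb[OF G]
    by simp
  have finD: "finite (D G)" if G: "G \<in> regular_graphs n d" for G
    using D_eq[OF G] rg_finite_nb[OF G] by simp
  have lower: "card (D G) \<le> card (S G) + K" if G: "G \<in> regular_graphs n d" for G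
  proof -
    have Gs: "G \<subseteq> possible_edges n" using G rg_sub by blast
    have fin: "finite (nb G x)" for x using rg_finite_nb[OF G] .
    have nbu: "nb G u \<subseteq> {1..n}" "nb G v \<subseteq> {1..n}" using nb_sub(1)[OF Gs] by auto
    define P1 where "P1 = {u} \<times> nb G u"
    define P2 where "P2 = {v} \<times> nb G v"
    define P3 where "P3 = (\<lambda>x. (x,u)) ` nb G u"
    define P4 where "P4 = (\<lambda>x. (x,v)) ` nb G v"
    define P5 where "P5 = D G \<inter> {(x,y). {x,y} \<in> H}"
    define P6 where "P6 = Sigma (nb G u) (nb G)"
    define P7 where "P7 = (\<lambda>(y,x). (x,y)) ` Sigma (nb G v) (nb G)"
    have sub: "D G \<subseteq> S G \<union> P1 \<union> P2 \<union> P3 \<union> P4 \<union> P5 \<union> P6 \<union> P7"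
    proof
      fix p assume "p \<in> D G"
      then obtain x y where p: "p = (x,y)" and e: "{x,y} \<in> G" unfolding D_def by auto
      show "p \<in> S G \<union> P1 \<union> P2 \<union> P3 \<union> P4 \<union> P5 \<union> P6 \<union> P7"
      proof (cases "p \<in> S G")
        case True thus ?thesis by simp
      next
        case False
        hence c: "x = u \<or> x = v \<or> y = u \<or> y = v \<or> {x,y} \<in> H \<or> {u,x} \<in> G \<or> {v,y} \<in> G"
          using p e unfolding S_def by auto
        have yx: "y \<in> nb G x" "x \<in> nb G y" using e by (simp_all add: nb_def insert_commute)
        from c show ?thesis
        proof (elim disjE)
          assume "x = u" thus ?thesis using p yx unfolding P1_def by simp
        next
          assume "x = v" thus ?thesis using p yx unfolding P2_def by simp
        next
          assume "y = u" thus ?thesis using p yx unfolding P3_def by simp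
        next
          assume "y = v" thus ?thesis using p yx unfolding P4_def by simp
        next
          assume "{x,y} \<in> H" thus ?thesis using p \<open>p \<in> D G\<close> unfolding P5_def by simp
        next
          assume "{u,x} \<in> G" hence "x \<in> nb G u" by (simp add: nb_def)
          thus ?thesis using p yx unfolding P6_def by simp
        next
          assume "{v,y} \<in> G" hence "y \<in> nb G v" by (simp add: nb_def)
          hence "(y,x) \<in> Sigma (nb G v) (nb G)" using yx by simp
          hence "(x,y) \<in> P7" unfolding P7_def by (metis (no_types, lifting) case_prod_conv image_eqI)
          thus ?thesis using p by simp
        qed
      qed
    qed
    have c1: "card P1 = d" "card P2 = d" unfolding P1_def P2_def
      using rg_nb[OF G] uv by (simp_all add: card_cartesian_product_singleton)
    have c3: "card P3 \<le> d" "card P4 \<le> d" unfolding P3_def P4_def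
      using rg_nb[OF G] uv card_image_le[OF fin] by metis+
    have c6: "card P6 = d*d" unfolding P6_def
      using card_SigmaI[of "nb G u" "nb G"] fin sum_nb_const[OF G nbu(1)] rg_nb[OF G] uv by simp
    have c7: "card P7 \<le> d*d"
    proof -
      have "card (Sigma (nb G v) (nb G)) = d*d"
        using card_SigmaI[of "nb G v" "nb G"] fin sum_nb_const[OF G nbu(2)] rg_nb[OF G] uv by simp
      thus ?thesis unfolding P7_def using card_image_le fin
        by (metis finite_SigmaI)
    qed
    have c5: "card P5 \<le> 2 * card H"
    proof -
      have "inj_on (\<lambda>(x,y). ({x,y}, x < y)) P5"
      proof (rule inj_onI, clarify)
        fix x y x' y' assume a: "(x,y) \<in> P5" "(x',y') \<in> P5" "{x,y} = {x',y'}" "(x < y) = (x' < y')"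
        have "x \<noteq> y" using a(1) nb_sub(2)[OF Gs, of x] unfolding P5_def D_def nb_def by auto
        from a(3) have "(x = x' \<and> y = y') \<or> (x = y' \<and> y = x')" by (auto simp: doubleton_eq_iff)
        thus "x = x' \<and> y = y'" using a(4) \<open>x \<noteq> y\<close> by auto
      qed
      moreover have "(\<lambda>(x,y). ({x,y}, x < y)) ` P5 \<subseteq> H \<times> UNIV" unfolding P5_def by auto
      moreover have fin2: "finite (H \<times> (UNIV::bool set))" using fH by simp
      ultimately have "card P5 \<le> card (H \<times> (UNIV :: bool set))"
        by (rule card_inj_on_le)
      thus ?thesis by (simp add: card_cartesian_product)
    qed
    have finall: "finite (S G \<union> P1 \<union> P2 \<union> P3 \<union> P4 \<union> P5 \<union> P6 \<union> P7)"
    proof -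
      have "S G \<subseteq> D G" "P5 \<subseteq> D G" unfolding S_def D_def P5_def by auto
      hence "finite (S G)" "finite P5" using finD[OF G] finite_subset by metis+
      thus ?thesis unfolding P1_def P2_def P3_def P4_def P6_def P7_def using fin by simp
    qed
    have "card (D G) \<le> card (S G \<union> P1 \<union> P2 \<union> P3 \<union> P4 \<union> P5 \<union> P6 \<union> P7)"
      using card_mono[OF finall sub] .
    also have "\<dots> \<le> card (S G) + card P1 + card P2 + card P3 + card P4 + card P5 + card P6 + card P7"
      using card_Un_le[of "S G \<union> P1 \<union> P2 \<union> P3 \<union> P4 \<union> P5 \<union> P6" P7]
        card_Un_le[of "S G \<union> P1 \<union> P2 \<union> P3 \<union> P4 \<union> P5" P6]
        card_Un_le[of "S G \<union> P1 \<union> P2 \<union> P3 \<union> P4" P5]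
        card_Un_le[of "S G \<union> P1 \<union> P2 \<union> P3" P4]
        card_Un_le[of "S G \<union> P1 \<union> P2" P3]
        card_Un_le[of "S G \<union> P1" P2]
        card_Un_le[of "S G" P1] by linarith
    also have "\<dots> \<le> card (S G) + K" unfolding K_def using c1 c3 c5 c6 c7 by linarith
    finally show ?thesis .
  qed
  have finS: "finite (S G)" if G: "G \<in> regular_graphs n d" for G
  proof -
    have "S G \<subseteq> D G" unfolding S_def D_def by auto
    thus ?thesis using finD[OF G] finite_subset by metis
  qed
  have step1: "card A * (n*d) \<le> card (Sigma A S) + card A * K"
  proof -
    have "card A * (n*d) = (\<Sum>G\<in>A. card (D G))" using cardD unfolding A_def by simp
    also have "\<dots> \<le> (\<Sum>G\<in>A. card (S G) + K)" using lower unfolding A_def by (intro sum_mono) auto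
    also have "\<dots> = (\<Sum>G\<in>A. card (S G)) + card A * K" by (simp add: sum.distrib)
    also have "(\<Sum>G\<in>A. card (S G)) = card (Sigma A S)"
      using card_SigmaI[of A S] finA finS unfolding A_def by simp
    finally show ?thesis .
  qed
  have step2: "card (Sigma A S) \<le> card (Sigma B T)"
  proof (rule card_inj_on_le[where f = "\<lambda>(G,(x,y)). (sw G u v x y, (x,y))"])
    show "inj_on (\<lambda>(G,(x,y)). (sw G u v x y, (x,y))) (Sigma A S)"
    proof (rule inj_onI)
      fix p q assume p: "p \<in> Sigma A S" and q: "q \<in> Sigma A S"
        and eq: "(\<lambda>(G,(x,y)). (sw G u v x y, (x,y))) p = (\<lambda>(G,(x,y)). (sw G u v x y, (x,y))) q"
      obtain G x y where pp: "p = (G,x,y)" by (metis prod_cases3)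
      obtain G' x' y' where qq: "q = (G',x',y')" by (metis prod_cases3)
      have e: "sw G u v x y = sw G' u v x y" "x' = x" "y' = y" using eq pp qq by auto
      have a1: "G \<in> A" "(x,y) \<in> S G" using p pp by auto
      have a2: "G' \<in> A" "(x,y) \<in> S G'" using q qq e by auto
      have "G = insert {u,v} (insert {x,y} (sw G u v x y - {{u,x}} - {{v,y}}))"
        using a1 unfolding A_def S_def by (intro sw_inv) auto
      moreover have "G' = insert {u,v} (insert {x,y} (sw G' u v x y - {{u,x}} - {{v,y}}))"
        using a2 unfolding A_def S_def by (intro sw_inv) auto
      ultimately show "p = q" using e pp qq by simp
    qed
    show "(\<lambda>(G,(x,y)). (sw G u v x y, (x,y))) ` Sigma A S \<subseteq> Sigma B T"
    proof
      fix z assume "z \<in> (\<lambda>(G,(x,y)). (sw G u v x y, (x,y))) ` Sigma A S"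
      then obtain G x y where a: "G \<in> A" "(x,y) \<in> S G" and z: "z = (sw G u v x y, x, y)" by auto
      have G: "G \<in> regular_graphs n d" and HG: "H \<subseteq> G" and uvG: "{u,v} \<in> G" using a(1) unfolding A_def by auto
      have s: "{x,y} \<in> G" "x \<noteq> u" "x \<noteq> v" "y \<noteq> u" "y \<noteq> v" "{x,y} \<notin> H" "{u,x} \<notin> G" "{v,y} \<notin> G"
        using a(2) unfolding S_def by auto
      have r: "sw G u v x y \<in> regular_graphs n d" using sw_regular[OF G uvG s(1-5) s(7,8)] .
      have "H \<subseteq> sw G u v x y" using HG uvH s(6) unfolding sw_def by auto
      moreover have "{u,v} \<notin> sw G u v x y" using s(2-5) unfolding sw_def by (auto simp: doubleton_eq_iff)
      moreover have "(x,y) \<in> T (sw G u v x y)" unfolding T_def sw_def nb_def by auto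
      ultimately show "z \<in> Sigma B T" using r z unfolding B_def by simp
    qed
    show "finite (Sigma B T)" using finA unfolding T_def B_def
      using rg_finite_nb by (intro finite_SigmaI) auto
  qed
  have step3: "card (Sigma B T) = card B * (d*d)"
  proof -
    have "card (Sigma B T) = (\<Sum>G\<in>B. card (T G))"
    proof (rule card_SigmaI)
      show "finite B" using finA by simp
      show "\<forall>a\<in>B. finite (T a)" unfolding T_def B_def using rg_finite_nb by blast
    qed
    also have "\<dots> = (\<Sum>G\<in>B. d*d)"
      using rg_nb uv unfolding T_def B_def by (intro sum.cong) (auto simp: card_cartesian_product)
    finally show ?thesis by simp
  qed
  show ?thesis using step1 step2 step3 unfolding A_def[symmetric] B_def[symmetric] K_def[symmetric]
    by linarith
qed



definition NG :: "nat \<Rightarrow> nat \<Rightarrow> nat set set \<Rightarrow> nat" where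
  "NG n d F = card {G \<in> regular_graphs n d. F \<subseteq> G}"

lemma NG_step:
  fixes K :: real
  assumes fF: "finite F" and eF: "e \<notin> F" and K: "real (4*d + 2*card F + 2*(d*d)) \<le> K"
    and nK: "K < real n * real d"
  shows "real (NG n d (insert e F)) \<le> (real d^2 / (real n * real d - K)) * real (NG n d F)"
proof (cases "e \<in> possible_edges n")
  case False
  have "{G \<in> regular_graphs n d. insert e F \<subseteq> G} = {}"
    using False rg_sub by blast
  hence "NG n d (insert e F) = 0" unfolding NG_def by (metis card.empty)
  moreover have "real d^2 / (real n * real d - K) \<ge> 0" using nK by simp
  ultimately show ?thesis by (simp del: times_divide_eq_left)
next
  case True
  then obtain u v where e: "e = {u,v}" "u \<noteq> v" "u \<in> {1..n}" "v \<in> {1..n}"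
    unfolding possible_edges_def by blast
  define a where "a = card {G \<in> regular_graphs n d. F \<subseteq> G \<and> {u,v} \<in> G}"
  define b where "b = card {G \<in> regular_graphs n d. F \<subseteq> G \<and> {u,v} \<notin> G}"
  have sc: "a * (n*d) \<le> b * (d*d) + a * (4*d + 2*card F + 2*(d*d))"
    unfolding a_def b_def using switch_count[OF e(3,4,2) _ fF] eF e(1) by blast
  have aeq: "NG n d (insert e F) = a" unfolding NG_def a_def e(1) by (metis insert_subset)
  have "b \<le> NG n d F" unfolding NG_def b_def
    using regular_graphs_finite by (intro card_mono) auto
  have "real a * (real n * real d) \<le> real b * real d^2 + real a * K"
  proof -
    have "real a * (real n * real d) \<le> real b * real d^2 + real a * real (4*d + 2*card F + 2*(d*d))"
      using sc unfolding power2_eq_square by (metis of_nat_add of_nat_le_iff of_nat_mult)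
    also have "\<dots> \<le> real b * real d^2 + real a * K" using K by (intro add_left_mono mult_left_mono) auto
    finally show ?thesis .
  qed
  hence "real a * (real n * real d - K) \<le> real b * real d^2" by (simp add: algebra_simps)
  also have "\<dots> \<le> real (NG n d F) * real d^2" using \<open>b \<le> NG n d F\<close> by (intro mult_right_mono) auto
  finally have "real a \<le> real (NG n d F) * real d^2 / (real n * real d - K)"
    using nK by (simp add: field_simps)
  thus ?thesis using aeq by (simp add: mult.commute)
qed

lemma NG_iter:
  fixes K :: real
  assumes fF: "finite F" and m: "card F \<le> m" and K: "real (4*d + 2*m + 2*(d*d)) \<le> K"
    and nK: "K < real n * real d"
  shows "real (NG n d F) \<le> (real d^2 / (real n * real d - K)) ^ card F * real (NG n d {})"
  using fF m
proof (induction F rule: finite_induct)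
  case empty thus ?case by simp
next
  case (insert e F)
  have cF: "card F \<le> m" using insert by simp
  have K': "real (4*d + 2*card F + 2*(d*d)) \<le> K" using K cF by simp
  have "real (NG n d (insert e F)) \<le> (real d^2 / (real n * real d - K)) * real (NG n d F)"
    using NG_step[OF insert(1,2) K' nK] .
  also have "\<dots> \<le> (real d^2 / (real n * real d - K)) * ((real d^2 / (real n * real d - K)) ^ card F * real (NG n d {}))"
    using insert(3)[OF cF] nK by (intro mult_left_mono) auto
  finally show ?case using insert by simp
qed



definition cedges :: "nat list \<Rightarrow> nat set set" where
  "cedges xs = (\<lambda>i. {xs!i, xs!(Suc i mod length xs)}) ` {..<length xs}"

lemma mod_aux:
  assumes "i < k" "j < k" "3 \<le> (k::nat)" "i = Suc j mod k" "Suc i mod k = j"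
  shows False
proof (cases "Suc j < k")
  case True
  hence i: "i = Suc j" using assms(4) by simp
  show False
  proof (cases "Suc (Suc j) < k")
    case True thus False using assms(5) i by simp
  next
    case False
    hence "Suc (Suc j) = k" using \<open>Suc j < k\<close> by linarith
    hence "Suc i mod k = 0" using i by simp
    thus False using assms(5) \<open>Suc (Suc j) = k\<close> assms(3) by simp
  qed
next
  case False
  hence "Suc j = k" using assms(2) by linarith
  hence "i = 0" using assms(4) by simp
  hence "Suc i mod k = 1" using assms(3) by simp
  thus False using assms(5) \<open>Suc j = k\<close> assms(3) by simp
qed

lemma card_cedges:
  assumes "distinct xs" "3 \<le> length xs"
  shows "card (cedges xs) = length xs"
proof -
  let ?k = "length xs"
  have "inj_on (\<lambda>i. {xs!i, xs!(Suc i mod ?k)}) {..<?k}"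
  proof (rule inj_onI)
    fix i j assume i: "i \<in> {..<?k}" and j: "j \<in> {..<?k}" and e: "{xs!i, xs!(Suc i mod ?k)} = {xs!j, xs!(Suc j mod ?k)}"
    have kp: "0 < ?k" using assms(2) by linarith
    have si: "Suc i mod ?k < ?k" "Suc j mod ?k < ?k" using mod_less_divisor[OF kp] by blast+
    show "i = j"
    proof (rule ccontr)
      assume "i \<noteq> j"
      hence "xs!i \<noteq> xs!j" using i j assms(1) nth_eq_iff_index_eq by auto
      hence "xs!i = xs!(Suc j mod ?k) \<and> xs!(Suc i mod ?k) = xs!j" using e by (auto simp: doubleton_eq_iff)
      hence "i = Suc j mod ?k" "Suc i mod ?k = j" using i j si assms(1) nth_eq_iff_index_eq by auto
      thus False using i j assms(2) \<open>i \<noteq> j\<close>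
        by (intro mod_aux[of i ?k j]) auto
    qed
  qed
  thus ?thesis unfolding cedges_def using card_image by fastforce
qed

lemma cycle_witness:
  assumes G: "G \<subseteq> possible_edges n" and c: "is_cycle G C"
  shows "\<exists>xs. distinct xs \<and> 3 \<le> length xs \<and> set xs = C \<and> set xs \<subseteq> {1..n} \<and> cedges xs \<subseteq> G"
proof -
  obtain xs where xs: "distinct xs" "length xs \<ge> 3" "set xs = C"
    and ed: "\<forall>i. i + 1 < length xs \<longrightarrow> {xs ! i, xs ! (i + 1)} \<in> G" and la: "{last xs, hd xs} \<in> G"
    using c unfolding is_cycle_def by blast
  have ce: "cedges xs \<subseteq> G"
  proof
    fix e assume "e \<in> cedges xs"
    then obtain i where i: "i < length xs" and e: "e = {xs!i, xs!(Suc i mod length xs)}" unfolding cedges_def by auto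
    show "e \<in> G"
    proof (cases "Suc i < length xs")
      case True thus ?thesis using ed e by simp
    next
      case False
      hence "Suc i = length xs" using i by simp
      hence "Suc i mod length xs = 0" "i = length xs - 1" by auto
      moreover have "xs \<noteq> []" using xs by auto
      ultimately have "e = {last xs, hd xs}" using e by (simp add: last_conv_nth hd_conv_nth)
      thus ?thesis using la by simp
    qed
  qed
  have "set xs \<subseteq> {1..n}"
  proof
    fix x assume "x \<in> set xs"
    then obtain i where i: "i < length xs" "x = xs!i" by (auto simp: in_set_conv_nth)
    hence "{xs!i, xs!(Suc i mod length xs)} \<in> G" using ce unfolding cedges_def by auto
    hence "{xs!i, xs!(Suc i mod length xs)} \<in> possible_edges n" using G by auto
    then obtain a b where "{xs!i, xs!(Suc i mod length xs)} = {a,b}" "a \<in> {1..n}" "b \<in> {1..n}"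
      unfolding possible_edges_def by blast
    thus "x \<in> {1..n}" using i by (metis doubleton_eq_iff)
  qed
  thus ?thesis using xs ce by blast
qed

lemma card_filter_sum: "finite A \<Longrightarrow> card {x\<in>A. P x} = (\<Sum>x\<in>A. if P x then 1 else 0)"
  by (simp add: sum.inter_filter[symmetric])

lemma count_cycles:
  fixes n d t :: nat
  defines "L \<equiv> {xs. set xs \<subseteq> {1..n} \<and> distinct xs \<and> 3 \<le> length xs \<and> length xs < t}"
  shows "(\<Sum>G\<in>regular_graphs n d. card (short_cycles t G)) \<le> (\<Sum>xs\<in>L. NG n d (cedges xs))"
proof -
  have finL: "finite L"
  proof -
    have "L \<subseteq> {xs. set xs \<subseteq> {1..n} \<and> length xs \<le> t}" unfolding L_def by auto
    moreover have "finite {xs. set xs \<subseteq> {1..n} \<and> length xs \<le> t}"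
      by (rule finite_lists_length_le) simp
    ultimately show ?thesis by (rule finite_subset)
  qed
  have a: "card (short_cycles t G) \<le> card {xs\<in>L. cedges xs \<subseteq> G}" if G: "G \<in> regular_graphs n d" for G
  proof -
    have "short_cycles t G \<subseteq> set ` {xs\<in>L. cedges xs \<subseteq> G}"
    proof
      fix C assume "C \<in> short_cycles t G"
      hence c: "is_cycle G C" "card C < t" unfolding short_cycles_def by auto
      obtain xs where xs: "distinct xs" "3 \<le> length xs" "set xs = C" "set xs \<subseteq> {1..n}" "cedges xs \<subseteq> G"
        using cycle_witness[OF rg_sub[OF G] c(1)] by blast
      have "length xs < t" using c(2) xs distinct_card by metis
      hence "xs \<in> {xs\<in>L. cedges xs \<subseteq> G}" using xs unfolding L_def by simp
      thus "C \<in> set ` {xs\<in>L. cedges xs \<subseteq> G}" using xs(3) by blast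
    qed
    hence "card (short_cycles t G) \<le> card (set ` {xs\<in>L. cedges xs \<subseteq> G})"
      using finL by (intro card_mono) auto
    also have "\<dots> \<le> card {xs\<in>L. cedges xs \<subseteq> G}" using finL by (intro card_image_le) auto
    finally show ?thesis .
  qed
  have "(\<Sum>G\<in>regular_graphs n d. card (short_cycles t G)) \<le> (\<Sum>G\<in>regular_graphs n d. card {xs\<in>L. cedges xs \<subseteq> G})"
    using a by (intro sum_mono) auto
  also have "\<dots> = (\<Sum>G\<in>regular_graphs n d. \<Sum>xs\<in>L. if cedges xs \<subseteq> G then 1 else 0)"
    using card_filter_sum[OF finL] by simp
  also have "\<dots> = (\<Sum>xs\<in>L. \<Sum>G\<in>regular_graphs n d. if cedges xs \<subseteq> G then 1 else 0)"
    by (rule sum.swap)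
  also have "\<dots> = (\<Sum>xs\<in>L. NG n d (cedges xs))"
    unfolding NG_def using card_filter_sum[OF regular_graphs_finite] by simp
  finally show ?thesis .
qed



lemma ev_bound:
  fixes c1 c2 c3 :: real
  assumes c3: "c3 > 0" and c1: "c1 \<ge> 0" and c2: "c2 \<ge> 0"
  shows "\<exists>N::nat. \<forall>n\<ge>N. c1 + c2 * ln (real n) \<le> c3 * real n"
proof -
  define N where "N = nat \<lceil>max ((4*c2/c3)^2) (2*c1/c3)\<rceil> + 1"
  have "c1 + c2 * ln (real n) \<le> c3 * real n" if n: "n \<ge> N" for n
  proof -
    have "real n \<ge> real N" using n by simp
    moreover have "real N \<ge> max ((4*c2/c3)^2) (2*c1/c3)" unfolding N_def by linarith
    ultimately have n1: "real n \<ge> (4*c2/c3)^2" and n2: "real n \<ge> 2*c1/c3" by auto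
    have npos: "real n > 0" using n unfolding N_def by simp
    have s: "sqrt (real n) \<ge> 4*c2/c3"
      using real_sqrt_le_mono[OF n1] c2 c3 by simp
    have "ln (sqrt (real n)) \<le> sqrt (real n) - 1" using npos by (intro ln_le_minus_one) simp
    hence l: "ln (real n) \<le> 2 * sqrt (real n)" using npos by (simp add: ln_sqrt)
    have "c2 * ln (real n) \<le> c2 * (2 * sqrt (real n))" using l c2 by (rule mult_left_mono)
    also have "\<dots> = (c3/2) * ((4*c2/c3) * sqrt (real n))" using c3 by (simp add: field_simps)
    also have "\<dots> \<le> (c3/2) * (sqrt (real n) * sqrt (real n))"
      using s c3 by (intro mult_left_mono mult_right_mono) auto
    also have "\<dots> = c3 * real n / 2" using npos by simp
    finally have a: "c2 * ln (real n) \<le> c3 * real n / 2" .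
    have "c1 \<le> c3 * real n / 2" using n2 c3 by (simp add: field_simps)
    thus ?thesis using a by linarith
  qed
  thus ?thesis by blast
qed

lemma analytic:
  fixes \<epsilon> :: real and d n t :: nat
  assumes e: "0 < \<epsilon>" "\<epsilon> < 1/5" and d: "d \<ge> 3" and n: "n \<ge> 1"
    and t: "real t \<le> 2 * \<epsilon> * log d n"
  shows "real t \<le> ln n"
    and "real t * (real d * exp (\<epsilon>/2)) ^ t \<le> (2/\<epsilon>) * real n powr (3*\<epsilon>)"
proof -
  have np: "real n > 0" using n by simp
  have lnn: "ln (real n) \<ge> 0" using n by simp
  have "exp 1 \<le> real d" using exp_le d by linarith
  hence "ln (exp 1) \<le> ln (real d)" using d by (subst ln_le_cancel_iff) auto
  hence lnd: "ln (real d) \<ge> 1" by simp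
  have "log d n = ln n / ln d" by (simp add: log_def)
  also have "\<dots> \<le> ln n" using lnd lnn by (simp add: divide_le_eq mult_le_cancel_left1 order_trans) 
  finally have "log d n \<le> ln n" .
  have lg0: "log d n \<ge> 0" using lnn lnd by (simp add: log_def)
  have "2 * \<epsilon> * log d n \<le> 1 * log d n"
    using e lg0 by (intro mult_right_mono) auto
  hence "2 * \<epsilon> * log d n \<le> ln n" using \<open>log d n \<le> ln n\<close> by linarith
  thus tl: "real t \<le> ln n" using t by simp
  have dt: "real d ^ t \<le> real n powr (2*\<epsilon>)"
  proof -
    have "real d ^ t = real d powr real t" using d by (simp add: powr_realpow)
    also have "\<dots> \<le> real d powr (2 * \<epsilon> * log d n)" using t d by (intro powr_mono) auto
    also have "\<dots> = (real d powr (log d n)) powr (2*\<epsilon>)" by (simp add: powr_powr mult.commute)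
    also have "\<dots> = real n powr (2*\<epsilon>)" using d np by simp
    finally show ?thesis .
  qed
  have qt: "exp (\<epsilon>/2) ^ t \<le> real n powr (\<epsilon>/2)"
  proof -
    have "exp (\<epsilon>/2) ^ t = exp (\<epsilon>/2 * real t)" by (simp add: exp_of_nat_mult[symmetric] mult.commute)
    also have "\<dots> \<le> exp (\<epsilon>/2 * ln n)" using tl e by simp
    also have "\<dots> = real n powr (\<epsilon>/2)" using np by (simp add: powr_def mult.commute)
    finally show ?thesis .
  qed
  have tt: "real t \<le> (2/\<epsilon>) * real n powr (\<epsilon>/2)"
  proof -
    have "ln (real n powr (\<epsilon>/2)) \<le> real n powr (\<epsilon>/2) - 1" using np by (intro ln_le_minus_one) simp
    hence "\<epsilon>/2 * ln n \<le> real n powr (\<epsilon>/2)" using np by (simp add: ln_powr)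
    hence "ln n \<le> (2/\<epsilon>) * real n powr (\<epsilon>/2)" using e by (simp add: field_simps)
    thus ?thesis using tl by linarith
  qed
  have "real t * (real d * exp (\<epsilon>/2)) ^ t = real t * (real d ^ t * exp (\<epsilon>/2) ^ t)" by (simp add: power_mult_distrib)
  also have "\<dots> \<le> ((2/\<epsilon>) * real n powr (\<epsilon>/2)) * (real n powr (2*\<epsilon>) * real n powr (\<epsilon>/2))"
    using tt dt qt e by (intro mult_mono) auto
  also have "\<dots> = (2/\<epsilon>) * real n powr (3*\<epsilon>)"
    using np by (simp add: powr_add[symmetric] algebra_simps)
  finally show "real t * (real d * exp (\<epsilon>/2)) ^ t \<le> (2/\<epsilon>) * real n powr (3*\<epsilon>)" .
qed



lemma expect_bound:
  fixes K :: real and n d t :: nat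
  assumes K: "real (4*d + 2*t + 2*(d*d)) \<le> K" and nK: "K < real n * real d"
  shows "(\<Sum>G\<in>regular_graphs n d. real (card (short_cycles t G)))
     \<le> real (card (regular_graphs n d)) * (\<Sum>k<t. (real n * (real d^2 / (real n * real d - K))) ^ k)"
proof -
  define p where "p = real d^2 / (real n * real d - K)"
  have p0: "p \<ge> 0" unfolding p_def using nK by simp
  define L where "L = {xs. set xs \<subseteq> {1..n} \<and> distinct xs \<and> 3 \<le> length xs \<and> length xs < t}"
  define Lk where "Lk k = {xs. set xs \<subseteq> {1..n} \<and> length xs = k}" for k
  define N0 where "N0 = real (card (regular_graphs n d))"
  have N0: "real (NG n d {}) = N0" unfolding NG_def N0_def by simp
  have "(\<Sum>G\<in>regular_graphs n d. real (card (short_cycles t G))) \<le> (\<Sum>xs\<in>L. real (NG n d (cedges xs)))"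
  proof -
    have "real (\<Sum>G\<in>regular_graphs n d. card (short_cycles t G)) \<le> real (\<Sum>xs\<in>L. NG n d (cedges xs))"
      using count_cycles[where n=n and d=d and t=t] unfolding L_def by (simp only: of_nat_le_iff)
    thus ?thesis by (simp only: of_nat_sum)
  qed
  also have "\<dots> \<le> (\<Sum>xs\<in>L. p ^ length xs * N0)"
  proof (rule sum_mono)
    fix xs assume "xs \<in> L"
    hence xs: "distinct xs" "3 \<le> length xs" "length xs < t" unfolding L_def by auto
    have c: "card (cedges xs) = length xs" using card_cedges xs by blast
    have "finite (cedges xs)" unfolding cedges_def by simp
    from NG_iter[OF this _ K nK, of ] c xs N0
    show "real (NG n d (cedges xs)) \<le> p ^ length xs * N0" unfolding p_def by simp
  qed
  also have "\<dots> \<le> (\<Sum>xs\<in>(\<Union>k\<in>{..<t}. Lk k). p ^ length xs * N0)"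
  proof (rule sum_mono2)
    show "finite (\<Union>k\<in>{..<t}. Lk k)" unfolding Lk_def by (auto intro: finite_lists_length_eq)
    show "L \<subseteq> (\<Union>k\<in>{..<t}. Lk k)" unfolding L_def Lk_def by auto
    show "\<And>b. b \<in> (\<Union>k\<in>{..<t}. Lk k) - L \<Longrightarrow> 0 \<le> p ^ length b * N0" using p0 N0_def by simp
  qed
  also have "\<dots> = (\<Sum>k<t. \<Sum>xs\<in>Lk k. p ^ length xs * N0)"
    by (rule sum.UNION_disjoint) (auto simp: Lk_def intro: finite_lists_length_eq)
  also have "\<dots> = (\<Sum>k<t. real n ^ k * p ^ k * N0)"
  proof (rule sum.cong)
    fix k assume "k \<in> {..<t}"
    have "(\<Sum>xs\<in>Lk k. p ^ length xs * N0) = (\<Sum>xs\<in>Lk k. p ^ k * N0)"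
      unfolding Lk_def by (rule sum.cong) auto
    also have "\<dots> = real (card (Lk k)) * (p ^ k * N0)" by simp
    also have "card (Lk k) = n ^ k" unfolding Lk_def using card_lists_length_eq[of "{1..n}" k] by simp
    finally show "(\<Sum>xs\<in>Lk k. p ^ length xs * N0) = real n ^ k * p ^ k * N0" by simp
  qed simp
  also have "\<dots> = N0 * (\<Sum>k<t. (real n * p) ^ k)"
    by (simp add: sum_distrib_left power_mult_distrib mult.commute mult.left_commute)
  finally show ?thesis unfolding N0_def p_def .
qed



theorem lemma4p1:
  fixes \<epsilon> :: real and d :: nat
  assumes "0 < \<epsilon>" and "\<epsilon> < 1/5" and "d \<ge> 3"
  shows "\<exists>C > 0. \<forall>n t. n \<ge> 1 \<longrightarrow> regular_graphs n d \<noteq> {} \<longrightarrow>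
           1 \<le> t \<longrightarrow> real t \<le> 2 * \<epsilon> * log d n \<longrightarrow>
           measure_pmf.prob (uniform_regular n d)
             {G \<in> regular_graphs n d. real (card (short_cycles t G)) \<ge> real n powr (1 - 2 * \<epsilon>)}
           \<le> C * real n powr (5 * \<epsilon> - 1)"
proof -
  note e = assms(1,2) and d = assms(3)
  define q where "q = exp (\<epsilon>/2)"
  have q1: "q > 1" unfolding q_def using e by simp
  define c1 where "c1 = q * (4*real d + 2*(real d*real d))"
  define c2 where "c2 = 2*q"
  define c3 where "c3 = (q-1)*real d"
  have "c3 > 0" unfolding c3_def using q1 d by simp
  moreover have "c1 \<ge> 0" "c2 \<ge> 0" unfolding c1_def c2_def using q1 by auto
  ultimately obtain N where N: "\<And>n. n \<ge> N \<Longrightarrow> c1 + c2 * ln (real n) \<le> c3 * real n"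
    using ev_bound by blast
  define C where "C = max (2/\<epsilon>) (real N + 1)"
  have Cpos: "C > 0" unfolding C_def by auto
  have main: "measure_pmf.prob (uniform_regular n d)
             {G \<in> regular_graphs n d. real (card (short_cycles t G)) \<ge> real n powr (1 - 2 * \<epsilon>)}
           \<le> C * real n powr (5 * \<epsilon> - 1)"
    if n: "n \<ge> 1" and ne: "regular_graphs n d \<noteq> {}" and t1: "1 \<le> t" and t: "real t \<le> 2 * \<epsilon> * log d n" for n t
  proof -
    define T where "T = real n powr (1 - 2 * \<epsilon>)"
    define S where "S = {G \<in> regular_graphs n d. real (card (short_cycles t G)) \<ge> T}"
    have np: "real n > 0" using n by simp
    have Tpos: "T > 0" unfolding T_def using np by simp
    have finRG: "finite (regular_graphs n d)" by (rule regular_graphs_finite)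
    have N0pos: "card (regular_graphs n d) > 0" using ne finRG card_gt_0_iff by blast
    have prob: "measure_pmf.prob (uniform_regular n d) S = real (card S) / real (card (regular_graphs n d))"
      unfolding uniform_regular_def using ne finRG
      by (simp add: measure_pmf_of_set S_def Int_absorb1)
    have SRG: "S \<subseteq> regular_graphs n d" unfolding S_def by auto
    show ?thesis
    proof (cases "n < N")
      case True
      have "measure_pmf.prob (uniform_regular n d) S \<le> 1" by simp
      also have "1 \<le> C * real n powr (5 * \<epsilon> - 1)"
      proof -
        have "real n powr (-1) \<le> real n powr (5 * \<epsilon> - 1)" using n e by (intro powr_mono) auto
        hence "1 / real n \<le> real n powr (5 * \<epsilon> - 1)" using np by (simp add: powr_minus_divide)
        moreover have "real n \<le> C" unfolding C_def using True by linarith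
        ultimately have "real n * (1 / real n) \<le> C * real n powr (5 * \<epsilon> - 1)"
          using np by (intro mult_mono) auto
        thus ?thesis using np by simp
      qed
      finally show ?thesis unfolding S_def T_def .
    next
      case False
      hence nN: "n \<ge> N" by simp
      have tl: "real t \<le> ln n" and an: "real t * (real d * q) ^ t \<le> (2/\<epsilon>) * real n powr (3*\<epsilon>)"
        using analytic[OF e d n t] unfolding q_def by auto
      define K where "K = real (4*d + 2*t + 2*(d*d))"
      have KK: "K \<le> 4*real d + 2*(real d*real d) + 2 * ln n" unfolding K_def using tl by simp
      have qK: "q * K \<le> (q-1) * real n * real d"
      proof -
        have "q * K \<le> q * (4*real d + 2*(real d*real d) + 2 * ln n)" using KK q1 by simp
        also have "\<dots> = c1 + c2 * ln (real n)" unfolding c1_def c2_def by (simp add: algebra_simps)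
        also have "\<dots> \<le> c3 * real n" using N[OF nN] .
        finally show ?thesis unfolding c3_def by (simp add: algebra_simps)
      qed
      have nd: "real n * real d > 0" using np d by simp
      have nK: "K < real n * real d"
      proof -
        have "q * K \<le> q * (real n * real d) - real n * real d" using qK by (simp add: algebra_simps)
        hence "q * K < q * (real n * real d)" using nd by linarith
        thus ?thesis using q1 by simp
      qed
      define p where "p = real d^2 / (real n * real d - K)"
      have np_le: "real n * p \<le> real d * q"
      proof -
        have pos: "real n * real d - K > 0" using nK by simp
        have "real n * real d \<le> q * (real n * real d - K)" using qK by (simp add: algebra_simps)
        hence "real d * (real n * real d) \<le> real d * (q * (real n * real d - K))"
          using d by (intro mult_left_mono) auto
        hence "real n * real d^2 \<le> real d * q * (real n * real d - K)" by (simp add: power2_eq_square algebra_simps)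
        thus ?thesis unfolding p_def using pos by (simp add: field_simps)
      qed
      have p0: "real n * p \<ge> 0" unfolding p_def using nK np by simp
      have "1 * 1 \<le> real d * q" using q1 d by (intro mult_mono) auto
      hence dq1: "real d * q \<ge> 1" by simp
      have "(\<Sum>k<t. (real n * p) ^ k) \<le> (\<Sum>k<t. (real d * q) ^ t)"
      proof (rule sum_mono)
        fix k assume "k \<in> {..<t}"
        have "(real n * p) ^ k \<le> (real d * q) ^ k" using np_le p0 by (intro power_mono) auto
        also have "\<dots> \<le> (real d * q) ^ t" using dq1 \<open>k \<in> {..<t}\<close> by (intro power_increasing) auto
        finally show "(real n * p) ^ k \<le> (real d * q) ^ t" .
      qed
      also have "\<dots> = real t * (real d * q) ^ t" by simp
      finally have sumb: "(\<Sum>k<t. (real n * p) ^ k) \<le> (2/\<epsilon>) * real n powr (3*\<epsilon>)" using an by linarith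
      have eb: "(\<Sum>G\<in>regular_graphs n d. real (card (short_cycles t G)))
          \<le> real (card (regular_graphs n d)) * (\<Sum>k<t. (real n * p) ^ k)"
        using expect_bound[of d t K n] nK unfolding K_def p_def by simp
      have "real (card S) * T = (\<Sum>G\<in>S. T)" by simp
      also have "\<dots> \<le> (\<Sum>G\<in>S. real (card (short_cycles t G)))" unfolding S_def by (intro sum_mono) auto
      also have "\<dots> \<le> (\<Sum>G\<in>regular_graphs n d. real (card (short_cycles t G)))"
        using SRG finRG by (intro sum_mono2) auto
      also have "\<dots> \<le> real (card (regular_graphs n d)) * ((2/\<epsilon>) * real n powr (3*\<epsilon>))"
        using eb sumb by (meson mult_left_mono of_nat_0_le_iff order_trans)
      finally have cs: "real (card S) * T \<le> real (card (regular_graphs n d)) * ((2/\<epsilon>) * real n powr (3*\<epsilon>))" .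
      have "measure_pmf.prob (uniform_regular n d) S = real (card S) / real (card (regular_graphs n d))" by (rule prob)
      also have "\<dots> \<le> (2/\<epsilon>) * real n powr (3*\<epsilon>) / T"
      proof -
        define X where "X = (2/\<epsilon>) * real n powr (3*\<epsilon>)"
        define M where "M = real (card (regular_graphs n d))"
        have Mp: "M > 0" unfolding M_def using N0pos by simp
        have "real (card S) * T \<le> M * X" using cs unfolding X_def M_def .
        hence "real (card S) \<le> M * X / T" by (simp only: pos_le_divide_eq[OF Tpos])
        hence "real (card S) / M \<le> (M * X / T) / M" using Mp by (intro divide_right_mono) auto
        also have "\<dots> = X / T" using Mp by simp
        finally show ?thesis unfolding X_def M_def .
      qed
      also have "\<dots> = (2/\<epsilon>) * real n powr (5*\<epsilon> - 1)"
      proof -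
        have "real n powr (3*\<epsilon> - (1 - 2*\<epsilon>)) = real n powr (3*\<epsilon>) / T"
          unfolding T_def by (rule powr_diff)
        moreover have "3*\<epsilon> - (1 - 2*\<epsilon>) = 5*\<epsilon> - 1" by simp
        ultimately have pw: "real n powr (3*\<epsilon>) / T = real n powr (5*\<epsilon> - 1)" by simp
        show ?thesis by (simp only: times_divide_eq_right[symmetric] pw)
      qed
      also have "\<dots> \<le> C * real n powr (5*\<epsilon> - 1)" unfolding C_def by (intro mult_right_mono) auto
      finally show ?thesis unfolding S_def T_def .
    qed
  qed
  show ?thesis using Cpos main by blast
qed

end
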